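(* Let $d\ge1$ and $\delta\in(0,1]$. For $x\in\mathbb{S}^{d-1}$ let $x'_i=\lfloor x_i\sqrt d/\delta+\tfrac12\rfloor\,\delta/\sqrt d$ for $i=1,\dots,d$, and let $f(x)=x'/\|x'\|_2$. Let $\alpha',\beta'\in[0,1]$ with $\alpha'>\beta'$, and suppose \[ \delta<\frac{\alpha'-\beta'}{\sqrt{2-2\alpha'}+\sqrt{2-2\beta'}} . \] Then there exists $t\in\mathbb{R}$ such that for all $x,y\in\mathbb{S}^{d-1}$: - $\langle x,y\rangle\ge\alpha'$ implies $\langle f(x),f(y)\rangle\ge t$; - $\langle x,y\rangle\le\beta'$ implies $\langle f(x),f(y)\rangle<t$.
   Context: $\mathbb{S}^{d-1}$ denotes the Euclidean unit sphere in $\mathbb{R}^d$. *)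

theory Defs
  imports "HOL-Analysis.Analysis"
begin

definition grid_round :: "real \<Rightarrow> real ^ 'n \<Rightarrow> real ^ 'n" where
  "grid_round \<delta> x = (\<chi> i. real_of_int \<lfloor>x $ i * sqrt (real CARD('n)) / \<delta> + 1/2\<rfloor>
                              * \<delta> / sqrt (real CARD('n)))"

definition grid_proj :: "real \<Rightarrow> real ^ 'n \<Rightarrow> real ^ 'n" where
  "grid_proj \<delta> x = (1 / norm (grid_round \<delta> x)) *\<^sub>R grid_round \<delta> x"

end

theory Submission
  imports Defs
begin

definition ang :: "'a::real_inner \<Rightarrow> 'a \<Rightarrow> real" where
  "ang u v = arccos (u \<bullet> v)"

lemma inner_unit_bound:
  fixes u v :: "'a::real_inner"
  assumes "norm u = 1" "norm v = 1"
  shows "\<bar>u \<bullet> v\<bar> \<le> 1"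
  using Cauchy_Schwarz_ineq2[of u v] assms by simp

lemma ang_bounds:
  fixes u v :: "'a::real_inner"
  assumes "norm u = 1" "norm v = 1"
  shows "0 \<le> ang u v" "ang u v \<le> pi" "cos (ang u v) = u \<bullet> v"
  using inner_unit_bound[OF assms] unfolding ang_def
  by (auto intro!: arccos_lbound arccos_ubound cos_arccos)

lemma ang_sym: "ang u v = ang v u"
  unfolding ang_def by (simp add: inner_commute)

lemma inner_lower:
  fixes u v w :: "'a::real_inner"
  assumes u: "norm u = 1" and v: "norm v = 1" and w: "norm w = 1"
  shows "(u \<bullet> v) * (v \<bullet> w) - sqrt (1 - (u \<bullet> v)\<^sup>2) * sqrt (1 - (v \<bullet> w)\<^sup>2) \<le> u \<bullet> w"
proof -
  define a where "a = u \<bullet> v"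
  define b where "b = v \<bullet> w"
  define p where "p = u - a *\<^sub>R v"
  define q where "q = w - b *\<^sub>R v"
  have vv: "v \<bullet> v = 1" using v by (simp add: dot_square_norm)
  have uu: "u \<bullet> u = 1" using u by (simp add: dot_square_norm)
  have ww: "w \<bullet> w = 1" using w by (simp add: dot_square_norm)
  have vu: "v \<bullet> u = a" unfolding a_def by (rule inner_commute)
  have wv: "w \<bullet> v = b" unfolding b_def by (rule inner_commute)
  have pq: "p \<bullet> q = u \<bullet> w - b * (u \<bullet> v) - a * (v \<bullet> w) + a * b * (v \<bullet> v)"
    unfolding p_def q_def by (simp only: inner_diff_left inner_diff_right inner_scaleR_left inner_scaleR_right) (simp add: algebra_simps)
  have e1: "u \<bullet> w = a * b + p \<bullet> q"
    using pq vv unfolding a_def[symmetric] b_def[symmetric] by simp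
  have pp0: "p \<bullet> p = u \<bullet> u - a * (u \<bullet> v) - a * (v \<bullet> u) + a * a * (v \<bullet> v)"
    unfolding p_def by (simp only: inner_diff_left inner_diff_right inner_scaleR_left inner_scaleR_right) (simp add: algebra_simps)
  have pp: "p \<bullet> p = 1 - a\<^sup>2"
    using pp0 uu vv vu unfolding a_def[symmetric] by (simp add: power2_eq_square)
  have qq0: "q \<bullet> q = w \<bullet> w - b * (w \<bullet> v) - b * (v \<bullet> w) + b * b * (v \<bullet> v)"
    unfolding q_def by (simp only: inner_diff_left inner_diff_right inner_scaleR_left inner_scaleR_right) (simp add: algebra_simps)
  have qq: "q \<bullet> q = 1 - b\<^sup>2"
    using qq0 ww vv wv unfolding b_def[symmetric] by (simp add: power2_eq_square)
  have np: "norm p = sqrt (1 - a\<^sup>2)" using pp by (simp add: norm_eq_sqrt_inner)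
  have nq: "norm q = sqrt (1 - b\<^sup>2)" using qq by (simp add: norm_eq_sqrt_inner)
  have "- (norm p * norm q) \<le> p \<bullet> q"
    using Cauchy_Schwarz_ineq2[of p q] by linarith
  then show ?thesis using e1 np nq a_def b_def by simp
qed

lemma ang_triangle:
  fixes u v w :: "'a::real_inner"
  assumes u: "norm u = 1" and v: "norm v = 1" and w: "norm w = 1"
  shows "ang u w \<le> ang u v + ang v w"
proof (cases "ang u v + ang v w \<le> pi")
  case False
  then show ?thesis using ang_bounds(2)[OF u w] by linarith
next
  case True
  let ?A = "ang u v" and ?B = "ang v w"
  have bA: "\<bar>u \<bullet> v\<bar> \<le> 1" and bB: "\<bar>v \<bullet> w\<bar> \<le> 1" and bC: "\<bar>u \<bullet> w\<bar> \<le> 1"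
    using inner_unit_bound u v w by blast+
  have sA: "sin ?A = sqrt (1 - (u \<bullet> v)\<^sup>2)" unfolding ang_def using sin_arccos_abs[OF bA] .
  have sB: "sin ?B = sqrt (1 - (v \<bullet> w)\<^sup>2)" unfolding ang_def using sin_arccos_abs[OF bB] .
  have "cos (?A + ?B) = (u \<bullet> v) * (v \<bullet> w) - sqrt (1 - (u \<bullet> v)\<^sup>2) * sqrt (1 - (v \<bullet> w)\<^sup>2)"
    by (simp add: cos_add sA sB ang_bounds u v w)
  also have "\<dots> \<le> u \<bullet> w" by (rule inner_lower[OF u v w])
  finally have c: "cos (?A + ?B) \<le> u \<bullet> w" .
  have "arccos (u \<bullet> w) \<le> arccos (cos (?A + ?B))"
    using c bC arccos_le_arccos[of "cos (?A + ?B)" "u \<bullet> w"] by auto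
  also have "\<dots> = ?A + ?B"
    using True ang_bounds u v w by (intro arccos_cos) (auto intro: add_nonneg_nonneg)
  finally show ?thesis unfolding ang_def .
qed

lemma round_coord:
  fixes z c :: real
  assumes "c > 0"
  shows "\<bar>real_of_int \<lfloor>z / c + 1/2\<rfloor> * c - z\<bar> \<le> c / 2"
proof -
  have h1: "real_of_int \<lfloor>z / c + 1/2\<rfloor> \<le> z / c + 1/2" by linarith
  have h2: "z / c + 1/2 < real_of_int \<lfloor>z / c + 1/2\<rfloor> + 1" by linarith
  have h3: "z / c - 1/2 \<le> real_of_int \<lfloor>z / c + 1/2\<rfloor>" using h2 by linarith
  have "real_of_int \<lfloor>z / c + 1/2\<rfloor> * c \<le> (z / c + 1/2) * c"
    using h1 assms by (intro mult_right_mono) auto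
  moreover have "(z / c - 1/2) * c \<le> real_of_int \<lfloor>z / c + 1/2\<rfloor> * c"
    using h3 assms by (intro mult_right_mono) auto
  moreover have "(z / c + 1/2) * c = z + c/2" "(z / c - 1/2) * c = z - c/2" using assms by (simp_all add: field_simps)
  ultimately show ?thesis by (simp only: abs_le_iff) linarith
qed

lemma sq_norm_vec_sum: fixes e :: "real^'n" shows "(norm e)\<^sup>2 = (\<Sum>i\<in>UNIV. (e $ i)\<^sup>2)"
proof -
  have "(norm e)\<^sup>2 = e \<bullet> e" by (simp add: dot_square_norm)
  also have "\<dots> = (\<Sum>i\<in>UNIV. (e $ i)\<^sup>2)" unfolding inner_vec_def by (simp add: power2_eq_square)
  finally show ?thesis .
qed

lemma card_sq_eq: fixes \<delta> :: real shows "real CARD('n::finite) * ((\<delta> / sqrt (real CARD('n)))/2)\<^sup>2 = (\<delta>/2)\<^sup>2"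
proof -
  have "CARD('n) > 0" by simp
  then show ?thesis by (simp add: power_divide)
qed

lemma grid_round_err:
  fixes x :: "real ^ 'n"
  assumes "0 < \<delta>"
  shows "norm (grid_round \<delta> x - x) \<le> \<delta> / 2"
proof -
  define c where "c = \<delta> / sqrt (real CARD('n))"
  have cpos: "c > 0" unfolding c_def using assms by simp
  have comp: "(grid_round \<delta> x - x) $ i = real_of_int \<lfloor>x $ i / c + 1/2\<rfloor> * c - x $ i" for i
  proof -
    have a1: "x $ i * sqrt (real CARD('n)) / \<delta> = x $ i / c" unfolding c_def by simp
    have a2: "(grid_round \<delta> x - x) $ i = real_of_int \<lfloor>x $ i * sqrt (real CARD('n)) / \<delta> + 1/2\<rfloor> * (\<delta> / sqrt (real CARD('n))) - x $ i"
      unfolding grid_round_def by simp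
    show ?thesis unfolding a2 a1 c_def ..
  qed
  have each: "((grid_round \<delta> x - x) $ i)\<^sup>2 \<le> (c/2)\<^sup>2" for i
  proof -
    have "\<bar>(grid_round \<delta> x - x) $ i\<bar> \<le> c/2" unfolding comp by (rule round_coord[OF cpos])
    then have "\<bar>(grid_round \<delta> x - x) $ i\<bar>\<^sup>2 \<le> (c/2)\<^sup>2" by (rule power_mono) simp
    then show ?thesis by simp
  qed
  have "(norm (grid_round \<delta> x - x))\<^sup>2 = (\<Sum>i\<in>UNIV. ((grid_round \<delta> x - x) $ i)\<^sup>2)"
    unfolding sq_norm_vec_sum ..
  also have "\<dots> \<le> (\<Sum>i\<in>(UNIV::'n set). (c/2)\<^sup>2)"
    by (intro sum_mono each)
  also have "\<dots> = real CARD('n) * (c/2)\<^sup>2" by simp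
  also have "\<dots> = (\<delta>/2)\<^sup>2"
    unfolding c_def by (rule card_sq_eq)
  finally have "(norm (grid_round \<delta> x - x))\<^sup>2 \<le> (\<delta>/2)\<^sup>2" .
  then show ?thesis
    by (rule power2_le_imp_le) (use assms in simp)
qed

lemma grid_proj_props:
  fixes x :: "real ^ 'n"
  assumes x: "norm x = 1" and d0: "0 < \<delta>" and d1: "\<delta> \<le> 1"
  shows "norm (grid_proj \<delta> x) = 1" "sqrt (1 - (\<delta>/2)\<^sup>2) \<le> x \<bullet> grid_proj \<delta> x"
proof -
  define y where "y = grid_round \<delta> x"
  define r where "r = \<delta> / 2"
  define s where "s = x \<bullet> y"
  define N where "N = y \<bullet> y"
  have err: "norm (y - x) \<le> r" unfolding y_def r_def using grid_round_err[OF d0] .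
  have xx: "x \<bullet> x = 1" using x by (simp add: dot_square_norm)
  have "(y - x) \<bullet> (y - x) = N - 2 * s + 1"
    unfolding N_def s_def by (simp add: inner_diff_left inner_diff_right xx inner_commute)
  moreover have "(y - x) \<bullet> (y - x) \<le> r\<^sup>2"
    using err by (metis dot_square_norm norm_ge_zero power_mono)
  ultimately have key: "N - 2 * s + 1 \<le> r\<^sup>2" by simp
  have N0: "N \<ge> 0" unfolding N_def by simp
  have r0: "0 < r" "r \<le> 1/2" unfolding r_def using d0 d1 by auto
  have r2: "r\<^sup>2 \<le> (1/2)\<^sup>2" using r0 by (intro power_mono) auto
  have spos: "s > 0" using key N0 r2 by (simp add: power2_eq_square)
  have Npos: "N > 0"
  proof -
    have "s \<le> norm x * norm y" unfolding s_def using Cauchy_Schwarz_ineq2[of x y] by linarith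
    then have "s \<le> norm y" using x by simp
    then have "norm y > 0" using spos by linarith
    then show ?thesis unfolding N_def by (simp only: dot_square_norm) simp
  qed
  have ny: "norm y = sqrt N" unfolding N_def by (simp add: norm_eq_sqrt_inner)
  have sq: "(1 - r\<^sup>2) * N \<le> s\<^sup>2"
  proof -
    have "(1 - r\<^sup>2) * N \<le> (1 - r\<^sup>2) * (r\<^sup>2 + 2 * s - 1)"
    proof (rule mult_left_mono)
      show "N \<le> r\<^sup>2 + 2 * s - 1" using key by linarith
      show "0 \<le> 1 - r\<^sup>2" using r2 by (simp add: power2_eq_square)
    qed
    also have "\<dots> \<le> s\<^sup>2"
    proof -
      have "s\<^sup>2 - (1 - r\<^sup>2) * (r\<^sup>2 + 2 * s - 1) = (s - (1 - r\<^sup>2))\<^sup>2"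
        by (simp add: power2_eq_square algebra_simps)
      then show ?thesis using zero_le_power2[of "s - (1 - r\<^sup>2)"] by linarith
    qed
    finally show ?thesis .
  qed
  have gp: "grid_proj \<delta> x = (1 / sqrt N) *\<^sub>R y" unfolding grid_proj_def y_def[symmetric] ny ..
  show "norm (grid_proj \<delta> x) = 1" using Npos unfolding gp by (simp add: ny)
  have "x \<bullet> grid_proj \<delta> x = s / sqrt N" unfolding gp s_def by simp
  moreover have "sqrt (1 - r\<^sup>2) \<le> s / sqrt N"
  proof -
    have "sqrt (1 - r\<^sup>2) * sqrt N = sqrt ((1 - r\<^sup>2) * N)" by (simp add: real_sqrt_mult)
    also have "\<dots> \<le> sqrt (s\<^sup>2)" using sq by (rule real_sqrt_le_mono)
    also have "\<dots> = s" using spos by simp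
    finally have "sqrt (1 - r\<^sup>2) * sqrt N \<le> s" .
    moreover have "sqrt N > 0" using Npos by simp
    ultimately show ?thesis by (simp add: pos_le_divide_eq)
  qed
  ultimately show "sqrt (1 - (\<delta>/2)\<^sup>2) \<le> x \<bullet> grid_proj \<delta> x" unfolding r_def by simp
qed



lemma half_angle_sqrt:
  fixes A :: real
  assumes "0 \<le> A" "A \<le> pi"
  shows "sqrt (2 - 2 * cos A) = 2 * sin (A / 2)"
proof -
  have "cos A = cos (2 * (A / 2))" by simp
  also have "\<dots> = 1 - 2 * (sin (A/2))\<^sup>2" by (rule cos_double_sin)
  finally have "2 - 2 * cos A = (2 * sin (A / 2))\<^sup>2" by (simp add: power2_eq_square)
  moreover have "0 \<le> sin (A / 2)" using assms by (intro sin_ge_zero) auto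
  ultimately show ?thesis using real_sqrt_abs[of "2 * sin (A / 2)"] by (simp only:)
qed

theorem mainTheorem6:
  fixes \<delta> \<alpha> \<beta> :: real
  assumes "0 < \<delta>" "\<delta> \<le> 1"
    and "0 \<le> \<alpha>" "\<alpha> \<le> 1" "0 \<le> \<beta>" "\<beta> \<le> 1" "\<beta> < \<alpha>"
    and "\<delta> < (\<alpha> - \<beta>) / (sqrt (2 - 2 * \<alpha>) + sqrt (2 - 2 * \<beta>))"
  shows "\<exists>t::real. \<forall>x y :: real ^ 'n. norm x = 1 \<longrightarrow> norm y = 1 \<longrightarrow>
           (x \<bullet> y \<ge> \<alpha> \<longrightarrow> grid_proj \<delta> x \<bullet> grid_proj \<delta> y \<ge> t) \<and>
           (x \<bullet> y \<le> \<beta> \<longrightarrow> grid_proj \<delta> x \<bullet> grid_proj \<delta> y < t)"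
proof -
  define r where "r = \<delta> / 2"
  define A where "A = arccos \<alpha>"
  define B where "B = arccos \<beta>"
  define \<eta> where "\<eta> = arcsin r"
  have r0: "0 < r" "r \<le> 1/2" using assms(1,2) unfolding r_def by auto
  have cA: "cos A = \<alpha>" unfolding A_def using assms by (intro cos_arccos) auto
  have cB: "cos B = \<beta>" unfolding B_def using assms by (intro cos_arccos) auto
  have A0: "0 \<le> A" "A \<le> pi/2" unfolding A_def using assms arccos_lbound[of \<alpha>] arccos_le_pi2[of \<alpha>] by auto
  have B0: "0 \<le> B" "B \<le> pi/2" unfolding B_def using assms arccos_lbound[of \<beta>] arccos_le_pi2[of \<beta>] by auto
  have AB: "A < B" unfolding A_def B_def using assms by (intro arccos_less_arccos) auto
  define sa where "sa = sin (A/2)"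
  define sb where "sb = sin (B/2)"
  have sqa: "sqrt (2 - 2 * \<alpha>) = 2 * sa" unfolding sa_def cA[symmetric] using A0 by (intro half_angle_sqrt) auto
  have sqb: "sqrt (2 - 2 * \<beta>) = 2 * sb" unfolding sb_def cB[symmetric] using B0 by (intro half_angle_sqrt) auto
  have sa0: "0 \<le> sa" unfolding sa_def using A0 by (intro sin_ge_zero) auto
  have sb0: "0 < sb" unfolding sb_def using AB A0 B0 by (intro sin_gt_zero) auto
  have al: "\<alpha> = 1 - 2 * sa\<^sup>2" unfolding sa_def cA[symmetric]
    using cos_double_sin[of "A/2"] by simp
  have be: "\<beta> = 1 - 2 * sb\<^sup>2" unfolding sb_def cB[symmetric]
    using cos_double_sin[of "B/2"] by simp
  have "\<delta> < (\<alpha> - \<beta>) / (2 * sa + 2 * sb)" using assms(8) unfolding sqa sqb .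
  also have "(\<alpha> - \<beta>) / (2 * sa + 2 * sb) = sb - sa"
  proof -
    have "\<alpha> - \<beta> = (sb - sa) * (2 * sa + 2 * sb)" unfolding al be by (simp add: power2_eq_square algebra_simps)
    moreover have "2 * sa + 2 * sb \<noteq> 0" using sa0 sb0 by simp
    ultimately show ?thesis by simp
  qed
  finally have d1: "\<delta> < sb - sa" .
  define Q where "Q = (B - A) / 4"
  have "sb - sa = 2 * sin Q * cos ((B/2 + A/2)/2)"
    unfolding sa_def sb_def Q_def using sin_diff_sin[of "B/2" "A/2"] by (simp add: field_simps)
  also have "\<dots> \<le> 2 * sin Q"
  proof -
    have "0 \<le> sin Q" unfolding Q_def using AB A0 B0 by (intro sin_ge_zero) auto
    then show ?thesis using cos_le_one[of "(B/2 + A/2)/2"] by (simp add: mult_left_le)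
  qed
  finally have rQ: "r < sin Q" using d1 unfolding r_def by simp
  have Q0: "0 < Q" "Q \<le> pi/2" unfolding Q_def using AB A0 B0 by auto
  have "arcsin r < arcsin (sin Q)"
    using rQ r0 sin_le_one[of Q] by (intro arcsin_less_arcsin) auto
  then have etaQ: "\<eta> < Q" unfolding \<eta>_def using Q0 by (simp add: arcsin_sin)
  have eta0: "0 \<le> \<eta>" unfolding \<eta>_def using r0 by (intro arcsin_nonneg) auto
  have close: "ang x (grid_proj \<delta> x) \<le> \<eta>" if x: "norm x = 1" for x :: "real ^ 'n"
  proof -
    have p: "norm (grid_proj \<delta> x) = 1" "sqrt (1 - r\<^sup>2) \<le> x \<bullet> grid_proj \<delta> x"
      using grid_proj_props[OF x assms(1,2)] unfolding r_def by auto
    have b: "\<bar>x \<bullet> grid_proj \<delta> x\<bar> \<le> 1" using inner_unit_bound[OF x p(1)] .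
    have "arccos (x \<bullet> grid_proj \<delta> x) \<le> arccos (sqrt (1 - r\<^sup>2))"
    proof (rule arccos_le_arccos)
      have "r\<^sup>2 \<le> 1" using r0 by (intro power_le_one) auto
      then have "0 \<le> sqrt (1 - r\<^sup>2)" by simp
      then show "- 1 \<le> sqrt (1 - r\<^sup>2)" by linarith
      show "sqrt (1 - r\<^sup>2) \<le> x \<bullet> grid_proj \<delta> x" using p(2) .
      show "x \<bullet> grid_proj \<delta> x \<le> 1" using b by simp
    qed
    also have "\<dots> = \<eta>" unfolding \<eta>_def using r0 by (intro arcsin_arccos_sqrt_pos[symmetric]) auto
    finally show ?thesis unfolding ang_def .
  qed
  show ?thesis
  proof (intro exI allI impI conjI)
    fix x y :: "real ^ 'n"
    assume x: "norm x = 1" and y: "norm y = 1"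
    have fx: "norm (grid_proj \<delta> x) = 1" using grid_proj_props[OF x assms(1,2)] by auto
    have fy: "norm (grid_proj \<delta> y) = 1" using grid_proj_props[OF y assms(1,2)] by auto
    have cx: "ang x (grid_proj \<delta> x) \<le> \<eta>" using close[OF x] .
    have cy: "ang y (grid_proj \<delta> y) \<le> \<eta>" using close[OF y] .
    have bxy: "\<bar>x \<bullet> y\<bar> \<le> 1" using inner_unit_bound[OF x y] .
    have t1: "ang (grid_proj \<delta> x) (grid_proj \<delta> y) \<le> ang (grid_proj \<delta> x) x + ang x y + ang y (grid_proj \<delta> y)"
      using ang_triangle[OF fx x fy] ang_triangle[OF x y fy] by linarith
    have t2: "ang x y \<le> ang x (grid_proj \<delta> x) + ang (grid_proj \<delta> x) (grid_proj \<delta> y) + ang (grid_proj \<delta> y) y"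
      using ang_triangle[OF x fx y] ang_triangle[OF fx fy y] by linarith
    have fb: "0 \<le> ang (grid_proj \<delta> x) (grid_proj \<delta> y)" "ang (grid_proj \<delta> x) (grid_proj \<delta> y) \<le> pi"
      "cos (ang (grid_proj \<delta> x) (grid_proj \<delta> y)) = grid_proj \<delta> x \<bullet> grid_proj \<delta> y"
      using ang_bounds[OF fx fy] by auto
    {
      assume h: "x \<bullet> y \<ge> \<alpha>"
      have "ang x y \<le> A" unfolding ang_def A_def using h bxy assms by (intro arccos_le_arccos) auto
      then have le: "ang (grid_proj \<delta> x) (grid_proj \<delta> y) \<le> A + 2 * \<eta>"
        using t1 cx cy ang_sym[of x "grid_proj \<delta> x"] by linarith
      have "cos (A + 2 * \<eta>) \<le> cos (ang (grid_proj \<delta> x) (grid_proj \<delta> y))"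
        using le fb etaQ Q0 B0 unfolding Q_def by (intro cos_monotone_0_pi_le) auto
      then show "cos (A + 2 * \<eta>) \<le> grid_proj \<delta> x \<bullet> grid_proj \<delta> y" using fb(3) by simp
    }
    {
      assume h: "x \<bullet> y \<le> \<beta>"
      have "B \<le> ang x y" unfolding ang_def B_def using h bxy assms by (intro arccos_le_arccos) auto
      then have ge: "B - 2 * \<eta> \<le> ang (grid_proj \<delta> x) (grid_proj \<delta> y)"
        using t2 cx cy ang_sym[of y "grid_proj \<delta> y"] by linarith
      have "cos (ang (grid_proj \<delta> x) (grid_proj \<delta> y)) < cos (A + 2 * \<eta>)"
        using ge fb etaQ eta0 A0 unfolding Q_def by (intro cos_monotone_0_pi) auto
      then show "grid_proj \<delta> x \<bullet> grid_proj \<delta> y < cos (A + 2 * \<eta>)" using fb(3) by simp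
    }
  qed
qed

end
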